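(* Let $\Bbbk$ be an algebraically closed field and $A$ any finite dimensional $\Bbbk$-algebra. Then $\operatorname{HHdim} T(T(A))=\infty$.
   Context: For a finite dimensional algebra $B$, $T(B)=B\ltimes DB$ is the trivial extension: the vector space $B\oplus DB$, where $DB=\operatorname{Hom}_\Bbbk(B,\Bbbk)$ with its natural bimodule structure, with multiplication $(a,f)(b,g)=(ab,ag+fb)$. $\operatorname{HH}_n(B)=\operatorname{Tor}^{B\otimes_\Bbbk B^{\mathrm{op}}}_n(B,B)$ is the $n$-th Hochschild homology group, and $\operatorname{HHdim}B=\sup\{n\mid \operatorname{HH}_n(B)\neq 0\}$. *)

theory Defs
  imports "HOL-Computational_Algebra.Polynomial" "HOL-Library.Extended_Nat"
begin

(* A finite-dimensional algebra is presented by its dimension d and structure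
   constants c w.r.t. a basis e_0..e_{d-1}:  e_i * e_j = sum_k c i j k e_k. *)

definition alg_closed_field :: "'k::field itself \<Rightarrow> bool" where
  "alg_closed_field _ \<longleftrightarrow> (\<forall>p :: 'k poly. degree p > 0 \<longrightarrow> (\<exists>x. poly p x = 0))"

definition fd_algebra :: "(nat \<Rightarrow> nat \<Rightarrow> nat \<Rightarrow> 'k::field) \<Rightarrow> nat \<Rightarrow> bool" where
  "fd_algebra c d \<longleftrightarrow>
     (\<forall>i<d. \<forall>j<d. \<forall>l<d. \<forall>m<d.
        (\<Sum>k<d. c i j k * c k l m) = (\<Sum>k<d. c j l k * c i k m)) \<and>
     (\<exists>u :: nat \<Rightarrow> 'k. \<forall>j<d. \<forall>m<d.
        (\<Sum>i<d. u i * c i j m) = (if j = m then 1 else 0) \<and>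
        (\<Sum>i<d. u i * c j i m) = (if j = m then 1 else 0))"

(* Trivial extension T(B) = B \<ltimes> DB, of dimension 2d: basis e_0..e_{d-1} of B,
   followed by the dual basis e_0^*..e_{d-1}^* (index d+i) of DB, with bimodule
   structure (a f b)(x) = f(b x a). Hence
   e_i e_j^* = sum_m c m i j e_m^*,  e_j^* e_i = sum_m c i m j e_m^*,  DB*DB = 0. *)
definition trivext :: "(nat \<Rightarrow> nat \<Rightarrow> nat \<Rightarrow> 'k::field) \<Rightarrow> nat \<Rightarrow> nat \<Rightarrow> nat \<Rightarrow> nat \<Rightarrow> 'k" where
  "trivext c d i j k =
     (if i < d \<and> j < d \<and> k < d then c i j k
      else if i < d \<and> d \<le> j \<and> j < 2*d \<and> d \<le> k \<and> k < 2*d then c (k - d) i (j - d)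
      else if d \<le> i \<and> i < 2*d \<and> j < d \<and> d \<le> k \<and> k < 2*d then c j (k - d) (i - d)
      else 0)"

(* basis of B^{\<otimes> m}: index tuples *)
definition tuples :: "nat \<Rightarrow> nat \<Rightarrow> nat list set" where
  "tuples d m = {xs. length xs = m \<and> set xs \<subseteq> {..<d}}"

(* Hochschild chains C_n(B) = B^{\<otimes>(n+1)}, as coefficient functions *)
definition hchains :: "nat \<Rightarrow> nat \<Rightarrow> (nat list \<Rightarrow> 'k::field) set" where
  "hchains d n = {v. \<forall>xs. v xs \<noteq> 0 \<longrightarrow> xs \<in> tuples d (n+1)}"

(* coefficient of basis tensor ys in b_n(e_xs), xs of length n+1, n \<ge> 1 *)
definition hcoef :: "(nat \<Rightarrow> nat \<Rightarrow> nat \<Rightarrow> 'k::field) \<Rightarrow> nat \<Rightarrow> nat list \<Rightarrow> nat list \<Rightarrow> 'k" where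
  "hcoef c n xs ys =
     (\<Sum>i<n. if take i xs = take i ys \<and> drop (i+2) xs = drop (i+1) ys
             then (-1)^i * c (xs!i) (xs!(i+1)) (ys!i) else 0)
     + (if tl ys = take (n-1) (tl xs) then (-1)^n * c (xs!n) (xs!0) (ys!0) else 0)"

definition hbd :: "(nat \<Rightarrow> nat \<Rightarrow> nat \<Rightarrow> 'k::field) \<Rightarrow> nat \<Rightarrow> nat \<Rightarrow> (nat list \<Rightarrow> 'k) \<Rightarrow> nat list \<Rightarrow> 'k" where
  "hbd c d n v =
     (if n = 0 then (\<lambda>_. 0)
      else (\<lambda>ys. if ys \<in> tuples d n
                 then (\<Sum>xs\<in>tuples d (n+1). v xs * hcoef c n xs ys) else 0))"

definition HH_nonzero :: "(nat \<Rightarrow> nat \<Rightarrow> nat \<Rightarrow> 'k::field) \<Rightarrow> nat \<Rightarrow> nat \<Rightarrow> bool" where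
  "HH_nonzero c d n \<longleftrightarrow>
     (\<exists>z\<in>hchains d n. hbd c d n z = (\<lambda>_. 0) \<and>
        \<not> (\<exists>w\<in>hchains d (n+1). hbd c d (n+1) w = z))"

definition HHdim :: "(nat \<Rightarrow> nat \<Rightarrow> nat \<Rightarrow> 'k::field) \<Rightarrow> nat \<Rightarrow> enat" where
  "HHdim c d = Sup {enat n | n. HH_nonzero c d n}"

end

theory Submission
  imports Defs
begin


lemma sum_split2: "(\<Sum>k<2*(d::nat). f k) = (\<Sum>k<d. f k) + (\<Sum>k<d. f (k+d)::'a::comm_monoid_add)"
proof -
  have "(\<Sum>k<2*d. f k) = sum f {0..<d} + sum f {d..<2*d}"
    by (simp add: lessThan_atLeast0 sum.atLeastLessThan_concat)
  also have "sum f {d..<2*d} = (\<Sum>k<d. f (k+d))"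
    using sum.shift_bounds_nat_ivl[of f 0 d d] by (simp add: lessThan_atLeast0 mult_2)
  finally show ?thesis by (simp add: lessThan_atLeast0)
qed

locale hs =
 fixes c :: "nat \<Rightarrow> nat \<Rightarrow> nat \<Rightarrow> 'k::field" and d :: nat and u :: "nat \<Rightarrow> 'k"
 assumes assoc: "\<And>i j l m. i<d \<Longrightarrow> j<d \<Longrightarrow> l<d \<Longrightarrow> m<d \<Longrightarrow> (\<Sum>k<d. c i j k * c k l m) = (\<Sum>k<d. c j l k * c i k m)"
 and lunit: "\<And>j m. j<d \<Longrightarrow> m<d \<Longrightarrow> (\<Sum>i<d. u i * c i j m) = (if j = m then 1 else 0)"
 and runit: "\<And>j m. j<d \<Longrightarrow> m<d \<Longrightarrow> (\<Sum>i<d. u i * c j i m) = (if j = m then 1 else 0)"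
 and dpos: "d > 0"
begin

abbreviation "cB \<equiv> trivext c d"

lemma cB_assoc:
  assumes "i<2*d" "j<2*d" "l<2*d" "m<2*d"
  shows "(\<Sum>k<2*d. cB i j k * cB k l m) = (\<Sum>k<2*d. cB j l k * cB i k m)"
proof -
  consider "i<d" "j<d" "l<d" "m<d" | "i\<ge>d" "j<d" "l<d" "m\<ge>d" | "i<d" "j\<ge>d" "l<d" "m\<ge>d"
    | "i<d" "j<d" "l\<ge>d" "m\<ge>d" | "i<d" "j<d" "l<d" "m\<ge>d" 
    | "(i\<ge>d \<and> j \<ge> d) \<or> (i\<ge>d \<and> l\<ge>d) \<or> (j\<ge>d \<and> l\<ge>d)"
    | "m < d" "i\<ge>d \<or> j\<ge>d \<or> l\<ge>d" by linarith
  then show ?thesis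
  proof cases
    case 1
    then show ?thesis unfolding sum_split2 using assoc[of i j l m] assms by (simp add: sum_split2 trivext_def)
  next
    case 2
    then show ?thesis unfolding sum_split2 using assoc[of j l "m-d" "i-d"] assms by (simp add: sum_split2 trivext_def mult.commute)
  next
    case 3
    then show ?thesis unfolding sum_split2 using assoc[of l "m-d" i "j-d"] assms by (simp add: sum_split2 trivext_def mult.commute)
  next
    case 4
    then show ?thesis unfolding sum_split2 using assoc[of "m-d" i j "l-d"] assms by (simp add: sum_split2 trivext_def mult.commute)
  next
    case 5
    then show ?thesis unfolding sum_split2 using assms by (simp add: sum_split2 trivext_def)
  next
    case 6
    then show ?thesis unfolding sum_split2 using assms by (auto simp add: sum_split2 trivext_def)
  next
    case 7
    then show ?thesis unfolding sum_split2 using assms by (auto simp add: sum_split2 trivext_def)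
  qed
qed

end


lemma sum4: "(\<Sum>i\<in>I. \<Sum>j\<in>I. \<Sum>p\<in>I. \<Sum>q\<in>I. F i j p q) = (\<Sum>p\<in>I. \<Sum>q\<in>I. \<Sum>j\<in>I. \<Sum>i\<in>I. F i j p q)"
proof -
  have "(\<Sum>i\<in>I. \<Sum>j\<in>I. \<Sum>p\<in>I. \<Sum>q\<in>I. F i j p q) = (\<Sum>i\<in>I. \<Sum>p\<in>I. \<Sum>j\<in>I. \<Sum>q\<in>I. F i j p q)"
    by (rule sum.cong[OF refl], rule sum.swap)
  also have "\<dots> = (\<Sum>i\<in>I. \<Sum>p\<in>I. \<Sum>q\<in>I. \<Sum>j\<in>I. F i j p q)"
    by (rule sum.cong[OF refl], rule sum.cong[OF refl], rule sum.swap)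
  also have "\<dots> = (\<Sum>p\<in>I. \<Sum>i\<in>I. \<Sum>q\<in>I. \<Sum>j\<in>I. F i j p q)"
    by (rule sum.swap)
  also have "\<dots> = (\<Sum>p\<in>I. \<Sum>q\<in>I. \<Sum>i\<in>I. \<Sum>j\<in>I. F i j p q)"
    by (rule sum.cong[OF refl], rule sum.swap)
  also have "\<dots> = (\<Sum>p\<in>I. \<Sum>q\<in>I. \<Sum>j\<in>I. \<Sum>i\<in>I. F i j p q)"
    by (rule sum.cong[OF refl], rule sum.cong[OF refl], rule sum.swap)
  finally show ?thesis .
qed

lemma sum3: "(\<Sum>i\<in>I. \<Sum>q\<in>J. \<Sum>j\<in>K. G i q j) = (\<Sum>q\<in>J. \<Sum>j\<in>K. \<Sum>i\<in>I. G i q j)"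
proof -
  have "(\<Sum>i\<in>I. \<Sum>q\<in>J. \<Sum>j\<in>K. G i q j) = (\<Sum>q\<in>J. \<Sum>i\<in>I. \<Sum>j\<in>K. G i q j)"
    by (rule sum.swap)
  also have "\<dots> = (\<Sum>q\<in>J. \<Sum>j\<in>K. \<Sum>i\<in>I. G i q j)"
    by (rule sum.cong[OF refl], rule sum.swap)
  finally show ?thesis .
qed

context hs begin

definition mulv :: "(nat \<Rightarrow> 'k) \<Rightarrow> (nat \<Rightarrow> 'k) \<Rightarrow> nat \<Rightarrow> 'k" where
  "mulv v w = (\<lambda>k. \<Sum>i<2*d. \<Sum>j<2*d. v i * w j * cB i j k)"

lemma mulv_assoc: "mulv (mulv a b) e = mulv a (mulv b e)"
proof
  fix k
  have "mulv (mulv a b) e k = (\<Sum>i<2*d. \<Sum>j<2*d. \<Sum>p<2*d. \<Sum>q<2*d. a p * b q * e j * (cB p q i * cB i j k))"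
    by (simp add: mulv_def sum_distrib_left sum_distrib_right ac_simps)
  also have "\<dots> = (\<Sum>p<2*d. \<Sum>q<2*d. \<Sum>j<2*d. \<Sum>i<2*d. a p * b q * e j * (cB p q i * cB i j k))"
    by (rule sum4)
  also have "\<dots> = (\<Sum>p<2*d. \<Sum>q<2*d. \<Sum>j<2*d. a p * b q * e j * (\<Sum>i<2*d. cB p q i * cB i j k))"
    by (simp add: sum_distrib_left)
  also have "\<dots> = (\<Sum>p<2*d. \<Sum>q<2*d. \<Sum>j<2*d. a p * b q * e j * (\<Sum>i<2*d. cB q j i * cB p i k))"
  proof (intro sum.cong refl)
    fix p q j assume "p \<in> {..<2*d}" "q \<in> {..<2*d}" "j \<in> {..<2*d}"
    show "a p * b q * e j * (\<Sum>i<2*d. cB p q i * cB i j k) = a p * b q * e j * (\<Sum>i<2*d. cB q j i * cB p i k)"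
    proof (cases "k < 2*d")
      case True
      then show ?thesis using cB_assoc[of p q j k] \<open>p \<in> _\<close> \<open>q \<in> _\<close> \<open>j \<in> _\<close> by simp
    next
      case False
      then have "\<And>x y. cB x y k = 0" by (simp add: trivext_def)
      then show ?thesis by simp
    qed
  qed
  also have "\<dots> = (\<Sum>p<2*d. \<Sum>q<2*d. \<Sum>j<2*d. \<Sum>i<2*d. a p * b q * e j * (cB q j i * cB p i k))"
    by (simp add: sum_distrib_left)
  also have "\<dots> = (\<Sum>p<2*d. \<Sum>i<2*d. \<Sum>q<2*d. \<Sum>j<2*d. a p * b q * e j * (cB q j i * cB p i k))"
    by (rule sum.cong[OF refl], rule sum3[symmetric])
  also have "\<dots> = mulv a (mulv b e) k"
    by (simp add: mulv_def sum_distrib_left sum_distrib_right ac_simps)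
  finally show "mulv (mulv a b) e k = mulv a (mulv b e) k" .
qed


lemma mulv_add_l: "mulv (\<lambda>k. a k + b k) w = (\<lambda>k. mulv a w k + mulv b w k)"
  by (simp add: mulv_def algebra_simps sum.distrib)
lemma mulv_add_r: "mulv w (\<lambda>k. a k + b k) = (\<lambda>k. mulv w a k + mulv w b k)"
  by (simp add: mulv_def algebra_simps sum.distrib)
lemma mulv_sum_l: "mulv (\<lambda>k. \<Sum>m\<in>M. f m * g m k) w = (\<lambda>k. \<Sum>m\<in>M. f m * mulv (g m) w k)"
proof
  fix k
  have "mulv (\<lambda>k. \<Sum>m\<in>M. f m * g m k) w k = (\<Sum>i<2*d. \<Sum>j<2*d. \<Sum>m\<in>M. f m * (g m i * w j * cB i j k))"
    by (simp add: mulv_def sum_distrib_left sum_distrib_right ac_simps)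
  also have "\<dots> = (\<Sum>m\<in>M. \<Sum>i<2*d. \<Sum>j<2*d. f m * (g m i * w j * cB i j k))"
    by (rule sum3[symmetric])
  also have "\<dots> = (\<Sum>m\<in>M. f m * mulv (g m) w k)"
    by (simp add: mulv_def sum_distrib_left)
  finally show "mulv (\<lambda>k. \<Sum>m\<in>M. f m * g m k) w k = (\<Sum>m\<in>M. f m * mulv (g m) w k)" .
qed
lemma mulv_sum_r: "mulv w (\<lambda>k. \<Sum>m\<in>M. f m * g m k) = (\<lambda>k. \<Sum>m\<in>M. f m * mulv w (g m) k)"
proof
  fix k
  have "mulv w (\<lambda>k. \<Sum>m\<in>M. f m * g m k) k = (\<Sum>i<2*d. \<Sum>j<2*d. \<Sum>m\<in>M. f m * (w i * g m j * cB i j k))"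
    by (simp add: mulv_def sum_distrib_right sum_distrib_left ac_simps)
  also have "\<dots> = (\<Sum>m\<in>M. \<Sum>i<2*d. \<Sum>j<2*d. f m * (w i * g m j * cB i j k))"
    by (rule sum3[symmetric])
  also have "\<dots> = (\<Sum>m\<in>M. f m * mulv w (g m) k)"
    by (simp add: mulv_def sum_distrib_left)
  finally show "mulv w (\<lambda>k. \<Sum>m\<in>M. f m * g m k) k = (\<Sum>m\<in>M. f m * mulv w (g m) k)" .
qed

fun Wl :: "(nat \<Rightarrow> 'k) list \<Rightarrow> nat \<Rightarrow> 'k" where
  "Wl [] = (\<lambda>_. 0)"
| "Wl [v] = v"
| "Wl (v # w # vs) = mulv v (Wl (w # vs))"

lemma Wl_cons: "ls \<noteq> [] \<Longrightarrow> Wl (a # ls) = mulv a (Wl ls)"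
  by (cases ls) auto

lemma Wl_assoc_slot: "Wl (ps @ mulv a b # qs) = Wl (ps @ a # b # qs)"
proof (induction ps)
  case Nil
  then show ?case by (cases qs) (auto simp: mulv_assoc)
next
  case (Cons p ps)
  then show ?case by (simp add: Wl_cons)
qed

lemma Wl_add_slot: "Wl (ps @ (\<lambda>k. a k + b k) # qs) = (\<lambda>k. Wl (ps @ a # qs) k + Wl (ps @ b # qs) k)"
proof (induction ps)
  case Nil
  then show ?case by (cases qs) (auto simp: mulv_add_l)
next
  case (Cons p ps)
  then show ?case by (simp add: Wl_cons mulv_add_r)
qed

lemma Wl_sum_slot: "Wl (ps @ (\<lambda>k. \<Sum>m\<in>M. f m * g m k) # qs) = (\<lambda>k. \<Sum>m\<in>M. f m * Wl (ps @ g m # qs) k)"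
proof (induction ps)
  case Nil
  then show ?case by (cases qs) (auto simp: mulv_sum_l)
next
  case (Cons p ps)
  then show ?case by (simp add: Wl_cons mulv_sum_r)
qed

lemma Wl_snoc: "ls \<noteq> [] \<Longrightarrow> Wl (ls @ [a]) = mulv (Wl ls) a"
proof (induction ls)
  case Nil
  then show ?case by simp
next
  case (Cons x xs)
  show ?case
  proof (cases "xs = []")
    case True then show ?thesis by simp
  next
    case False then show ?thesis using Cons by (simp add: Wl_cons mulv_assoc)
  qed
qed

definition tr :: "(nat \<Rightarrow> 'k) \<Rightarrow> 'k" where "tr v = (\<Sum>k<d. v (d+k) * u k)"

lemma tr_add: "tr (\<lambda>k. a k + b k) = tr a + tr b"
  by (simp add: tr_def algebra_simps sum.distrib)
lemma tr_sum: "tr (\<lambda>k. \<Sum>m\<in>M. f m * g m k) = (\<Sum>m\<in>M. f m * tr (g m))"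
  by (simp add: tr_def sum_distrib_right sum_distrib_left ac_simps sum.swap[of _ M])

lemma lunit': "j<d \<Longrightarrow> m<d \<Longrightarrow> (\<Sum>i<d. c i j m * u i) = (if j = m then 1 else 0)"
  using lunit by (simp add: mult.commute)
lemma runit': "j<d \<Longrightarrow> m<d \<Longrightarrow> (\<Sum>i<d. c j i m * u i) = (if j = m then 1 else 0)"
  using runit by (simp add: mult.commute)

lemma trace_cB: assumes "i < 2*d" "j < 2*d"
  shows "(\<Sum>k<d. cB i j (d+k) * u k) = (\<Sum>k<d. cB j i (d+k) * u k)"
proof -
  consider "i<d" "j<d" | "i<d" "j\<ge>d" | "i\<ge>d" "j<d" | "i\<ge>d" "j\<ge>d" by linarith
  then show ?thesis
  proof cases
    case 1 then show ?thesis by (simp add: trivext_def)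
  next
    case 2 then show ?thesis using assms lunit'[of i "j-d"] runit'[of i "j-d"] by (simp add: trivext_def)
  next
    case 3 then show ?thesis using assms lunit'[of j "i-d"] runit'[of j "i-d"] by (simp add: trivext_def)
  next
    case 4 then show ?thesis by (simp add: trivext_def)
  qed
qed

lemma tr_comm: "tr (mulv a b) = tr (mulv b a)"
proof -
  have "tr (mulv a b) = (\<Sum>k<d. \<Sum>i<2*d. \<Sum>j<2*d. a i * b j * (cB i j (d+k) * u k))"
    by (simp add: tr_def mulv_def sum_distrib_left sum_distrib_right ac_simps)
  also have "\<dots> = (\<Sum>i<2*d. \<Sum>j<2*d. \<Sum>k<d. a i * b j * (cB i j (d+k) * u k))"
    by (rule sum3)
  also have "\<dots> = (\<Sum>i<2*d. \<Sum>j<2*d. a i * b j * (\<Sum>k<d. cB i j (d+k) * u k))"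
    by (simp add: sum_distrib_left)
  also have "\<dots> = (\<Sum>i<2*d. \<Sum>j<2*d. a i * b j * (\<Sum>k<d. cB j i (d+k) * u k))"
    by (intro sum.cong refl) (simp add: trace_cB)
  also have "\<dots> = (\<Sum>j<2*d. \<Sum>i<2*d. a i * b j * (\<Sum>k<d. cB j i (d+k) * u k))"
    by (rule sum.swap)
  also have "\<dots> = (\<Sum>j<2*d. \<Sum>i<2*d. \<Sum>k<d. b j * a i * (cB j i (d+k) * u k))"
    by (simp add: sum_distrib_left ac_simps)
  also have "\<dots> = (\<Sum>k<d. \<Sum>j<2*d. \<Sum>i<2*d. b j * a i * (cB j i (d+k) * u k))"
    by (rule sum3[symmetric])
  also have "\<dots> = tr (mulv b a)"
    by (simp add: tr_def mulv_def sum_distrib_left sum_distrib_right ac_simps)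
  finally show ?thesis .
qed


definition sg :: "nat \<Rightarrow> nat" where "sg j = (if j < d then j + d else j - d)"
definition pv :: "nat \<Rightarrow> nat \<Rightarrow> 'k" where "pv x = (\<lambda>k. if x < 2*d \<and> k = x then 1 else 0)"
definition ev :: "nat \<Rightarrow> nat \<Rightarrow> 'k" where
  "ev m = (\<lambda>k. if 2*d \<le> m \<and> m < 2*(2*d) \<and> k = sg (m - 2*d) then 1 else 0)"
abbreviation "CC \<equiv> trivext cB (2*d)"

lemma sg_lt: "j < 2*d \<Longrightarrow> sg j < 2*d" unfolding sg_def by arith
lemma sg_sg: "j < 2*d \<Longrightarrow> sg (sg j) = j" unfolding sg_def by arith

lemma S1: "x < 2*d \<Longrightarrow> k < 2*d \<Longrightarrow> y < 2*d \<Longrightarrow> cB (sg k) x y = cB x (sg y) k"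
  by (cases "x<d"; cases "k<d"; cases "y<d"; auto simp: sg_def trivext_def)
lemma S2: "x < 2*d \<Longrightarrow> k < 2*d \<Longrightarrow> y < 2*d \<Longrightarrow> cB y (sg k) x = cB (sg x) y k"
  by (cases "x<d"; cases "k<d"; cases "y<d"; auto simp: sg_def trivext_def)

lemma sum_pv: "(\<Sum>i<2*d. pv x i * F i) = (if x < 2*d then F x else 0)"
proof -
  have "(\<Sum>i<2*d. pv x i * F i) = (\<Sum>i<2*d. if i = x then (if x < 2*d then F x else 0) else 0)"
    by (intro sum.cong refl) (auto simp: pv_def)
  then show ?thesis by auto
qed
lemma sum_pv': "(\<Sum>i<2*d. F i * pv x i) = (if x < 2*d then F x else 0)"
proof -
  have "(\<Sum>i<2*d. F i * pv x i) = (\<Sum>i<2*d. if i = x then (if x < 2*d then F x else 0) else 0)"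
    by (intro sum.cong refl) (auto simp: pv_def)
  then show ?thesis by auto
qed
lemma sum_ev: "(\<Sum>i<2*d. ev y i * F i) = (if 2*d \<le> y \<and> y < 2*(2*d) then F (sg (y - 2*d)) else 0)"
proof -
  have "(\<Sum>i<2*d. ev y i * F i) = (\<Sum>i<2*d. if i = sg (y - 2*d) then (if 2*d \<le> y \<and> y < 2*(2*d) then F (sg (y - 2*d)) else 0) else 0)"
    by (intro sum.cong refl) (auto simp: ev_def)
  moreover have "2*d \<le> y \<and> y < 2*(2*d) \<Longrightarrow> sg (y - 2*d) < 2*d" by (rule sg_lt) linarith
  ultimately show ?thesis by auto
qed
lemma sum_ev': "(\<Sum>i<2*d. F i * ev y i) = (if 2*d \<le> y \<and> y < 2*(2*d) then F (sg (y - 2*d)) else 0)"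
proof -
  have "(\<Sum>i<2*d. F i * ev y i) = (\<Sum>i<2*d. if i = sg (y - 2*d) then (if 2*d \<le> y \<and> y < 2*(2*d) then F (sg (y - 2*d)) else 0) else 0)"
    by (intro sum.cong refl) (auto simp: ev_def)
  moreover have "2*d \<le> y \<and> y < 2*(2*d) \<Longrightarrow> sg (y - 2*d) < 2*d" by (rule sg_lt) linarith
  ultimately show ?thesis by auto
qed

lemma mulv_pv_l: "mulv (pv x) w k = (if x < 2*d then (\<Sum>j<2*d. w j * cB x j k) else 0)"
proof -
  have "mulv (pv x) w k = (\<Sum>i<2*d. pv x i * (\<Sum>j<2*d. w j * cB i j k))"
    by (simp add: mulv_def sum_distrib_left mult.assoc)
  then show ?thesis by (simp add: sum_pv)
qed
lemma mulv_pv_r: "mulv w (pv y) k = (if y < 2*d then (\<Sum>i<2*d. w i * cB i y k) else 0)"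
proof -
  have "mulv w (pv y) k = (\<Sum>i<2*d. (\<Sum>j<2*d. pv y j * (w i * cB i j k)))"
    by (simp add: mulv_def ac_simps)
  also have "\<dots> = (\<Sum>i<2*d. if y < 2*d then w i * cB i y k else 0)"
    by (simp add: sum_pv)
  finally show ?thesis by simp
qed

lemma cB_out: "k \<ge> 2*d \<Longrightarrow> cB i j k = 0" by (simp add: trivext_def)

lemma bimod: "(\<lambda>k. \<Sum>m<2*(2*d). CC x y m * ev m k) = (\<lambda>k. mulv (pv x) (ev y) k + mulv (ev x) (pv y) k)"
proof
  fix k
  have R: "mulv (pv x) (ev y) k + mulv (ev x) (pv y) k =
     (if x < 2*d \<and> 2*d \<le> y \<and> y < 2*(2*d) then cB x (sg (y - 2*d)) k else 0) +
     (if y < 2*d \<and> 2*d \<le> x \<and> x < 2*(2*d) then cB (sg (x - 2*d)) y k else 0)"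
    by (simp add: mulv_pv_l mulv_pv_r sum_ev sum_ev')
  show "(\<Sum>m<2*(2*d). CC x y m * ev m k) = mulv (pv x) (ev y) k + mulv (ev x) (pv y) k"
  proof (cases "k < 2*d")
    case False
    have "(\<Sum>m<2*(2*d). CC x y m * ev m k) = 0"
    proof (intro sum.neutral ballI)
      fix m assume "m \<in> {..<2*(2*d)}"
      then have "m - 2*d < 2*d" by auto
      then have "sg (m - 2*d) < 2*d" by (rule sg_lt)
      then show "CC x y m * ev m k = 0" using False by (auto simp: ev_def)
    qed
    then show ?thesis using False by (simp add: mulv_def cB_out)
  next
    case True
    have e: "\<And>m. (2*d \<le> m \<and> m < 2*(2*d) \<and> k = sg (m - 2*d)) = (m = 2*d + sg k)"
    proof -
      fix m
      show "(2*d \<le> m \<and> m < 2*(2*d) \<and> k = sg (m - 2*d)) = (m = 2*d + sg k)"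
      proof
        assume H: "2*d \<le> m \<and> m < 2*(2*d) \<and> k = sg (m - 2*d)"
        then have "m - 2*d < 2*d" by linarith
        then have "sg k = m - 2*d" using H sg_sg by simp
        then show "m = 2*d + sg k" using H by linarith
      next
        assume H: "m = 2*d + sg k"
        have "sg k < 2*d" using True by (rule sg_lt)
        then show "2*d \<le> m \<and> m < 2*(2*d) \<and> k = sg (m - 2*d)" using H sg_sg[OF True] by simp
      qed
    qed
    have "(\<Sum>m<2*(2*d). CC x y m * ev m k) = (\<Sum>m<2*(2*d). if m = 2*d + sg k then CC x y m else 0)"
      by (intro sum.cong refl) (simp only: ev_def e, simp)
    also have "\<dots> = CC x y (2*d + sg k)" using True sg_lt[of k] by simp
    also have "\<dots> = mulv (pv x) (ev y) k + mulv (ev x) (pv y) k"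
    proof -
      have sk: "sg k < 2*d" using True by (rule sg_lt)
      consider "x < 2*d" "2*d \<le> y" "y < 2*(2*d)" | "y < 2*d" "2*d \<le> x" "x < 2*(2*d)"
        | "\<not> (x < 2*d \<and> 2*d \<le> y \<and> y < 2*(2*d))" "\<not> (y < 2*d \<and> 2*d \<le> x \<and> x < 2*(2*d))"
        by linarith
      then show ?thesis
      proof cases
        case 1
        then have "CC x y (2*d + sg k) = cB (sg k) x (y - 2*d)" using sk by (simp add: trivext_def[of cB])
        also have "\<dots> = cB x (sg (y - 2*d)) k" using 1 True by (intro S1) auto
        finally show ?thesis unfolding R using 1 by simp
      next
        case 2
        then have "CC x y (2*d + sg k) = cB y (sg k) (x - 2*d)" using sk by (simp add: trivext_def[of cB])
        also have "\<dots> = cB (sg (x - 2*d)) y k" using 2 True by (intro S2) auto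
        finally show ?thesis unfolding R using 2 by simp
      next
        case 3
        then have "CC x y (2*d + sg k) = 0" using sk by (auto simp add: trivext_def[of cB])
        then show ?thesis unfolding R using 3 by auto
      qed
    qed
    finally show ?thesis .
  qed
qed

end


context hs begin

definition phi :: "nat list \<Rightarrow> 'k" where "phi ys = tr (Wl (map ev ys))"

lemma face:
  "(\<Sum>m<2*(2*d). CC a b m * phi (pre @ m # post)) =
     tr (Wl (map ev pre @ pv a # ev b # map ev post)) + tr (Wl (map ev pre @ ev a # pv b # map ev post))"
proof -
  let ?P = "map ev pre" and ?Q = "map ev post"
  have "(\<Sum>m<2*(2*d). CC a b m * phi (pre @ m # post)) = tr (\<lambda>k. \<Sum>m<2*(2*d). CC a b m * Wl (?P @ ev m # ?Q) k)"
    by (simp add: tr_sum phi_def)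
  also have "(\<lambda>k. \<Sum>m<2*(2*d). CC a b m * Wl (?P @ ev m # ?Q) k) = Wl (?P @ (\<lambda>k. \<Sum>m<2*(2*d). CC a b m * ev m k) # ?Q)"
    by (rule Wl_sum_slot[symmetric])
  also have "\<dots> = Wl (?P @ (\<lambda>k. mulv (pv a) (ev b) k + mulv (ev a) (pv b) k) # ?Q)"
    by (simp only: bimod)
  also have "\<dots> = (\<lambda>k. Wl (?P @ mulv (pv a) (ev b) # ?Q) k + Wl (?P @ mulv (ev a) (pv b) # ?Q) k)"
    by (rule Wl_add_slot)
  finally show ?thesis by (simp add: tr_add Wl_assoc_slot)
qed

lemma tr_rot: "ls \<noteq> [] \<Longrightarrow> tr (Wl (a # ls)) = tr (Wl (ls @ [a]))"
  by (simp add: Wl_cons Wl_snoc tr_comm)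

lemma telescope: "(\<Sum>i<Suc n. (-1)^i * (T i + T (Suc i))) = T 0 + (-1)^n * (T (Suc n) :: 'k)"
  by (induction n) (auto simp: algebra_simps)

end



lemma finite_tuples: "finite (tuples N L)"
  unfolding tuples_def using finite_lists_length_eq[of "{..<N}" L] by (simp add: conj_commute)

lemma select:
  assumes "set pre \<subseteq> {..<N}" "set post \<subseteq> {..<N}" "L = length pre + 1 + length post"
  shows "(\<Sum>ys\<in>tuples N L. if take (length pre) ys = pre \<and> drop (Suc (length pre)) ys = post then g ys else 0)
       = (\<Sum>m<N. g (pre @ m # post))"
proof -
  have "(\<Sum>ys\<in>tuples N L. if take (length pre) ys = pre \<and> drop (Suc (length pre)) ys = post then g ys else 0)
      = sum g {ys \<in> tuples N L. take (length pre) ys = pre \<and> drop (Suc (length pre)) ys = post}"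
    by (simp add: sum.inter_filter finite_tuples)
  also have "{ys \<in> tuples N L. take (length pre) ys = pre \<and> drop (Suc (length pre)) ys = post} = (\<lambda>m. pre @ m # post) ` {..<N}"
  proof (intro equalityI subsetI)
    fix ys assume "ys \<in> {ys \<in> tuples N L. take (length pre) ys = pre \<and> drop (Suc (length pre)) ys = post}"
    then have h: "length ys = L" "set ys \<subseteq> {..<N}" "take (length pre) ys = pre" "drop (Suc (length pre)) ys = post"
      by (auto simp: tuples_def)
    have lt: "length pre < length ys" using h assms by simp
    have "ys = take (length pre) ys @ ys!(length pre) # drop (Suc (length pre)) ys"
      using lt by (simp add: id_take_nth_drop)
    hence "ys = pre @ ys!(length pre) # post" using h by simp
    moreover have "ys!(length pre) < N" using h lt nth_mem by blast
    ultimately show "ys \<in> (\<lambda>m. pre @ m # post) ` {..<N}" by blast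
  next
    fix ys assume "ys \<in> (\<lambda>m. pre @ m # post) ` {..<N}"
    then show "ys \<in> {ys \<in> tuples N L. take (length pre) ys = pre \<and> drop (Suc (length pre)) ys = post}"
      using assms by (auto simp: tuples_def)
  qed
  also have "sum g ((\<lambda>m. pre @ m # post) ` {..<N}) = (\<Sum>m<N. g (pre @ m # post))"
    by (subst sum.reindex) (auto simp: inj_on_def)
  finally show ?thesis .
qed

context hs begin

lemma bound_zero:
  assumes xs: "xs \<in> tuples (2*(2*d)) (n+2)" and ev: "even n"
  shows "(\<Sum>ys\<in>tuples (2*(2*d)) (n+1). hcoef CC (n+1) xs ys * phi ys) = 0"
proof -
  define N where "N = 2*(2*d)"
  define T where "T j = tr (Wl ((map ev xs)[j := pv (xs!j)]))" for j
  have lx: "length xs = n+2" and sx: "set xs \<subseteq> {..<N}" using xs by (auto simp: tuples_def N_def)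
  define H where "H i ys = (if take i xs = take i ys \<and> drop (i+2) xs = drop (i+1) ys
             then (-1)^i * CC (xs!i) (xs!(i+1)) (ys!i) else 0)" for i ys
  define Cy where "Cy ys = (if tl ys = take n (tl xs) then (-1)^(n+1) * CC (xs!(n+1)) (xs!0) (ys!0) else 0)" for ys
  have hc: "hcoef CC (n+1) xs ys = (\<Sum>i<n+1. H i ys) + Cy ys" for ys
    by (simp add: hcoef_def H_def Cy_def)
  have "(\<Sum>ys\<in>tuples N (n+1). hcoef CC (n+1) xs ys * phi ys)
     = (\<Sum>i<n+1. \<Sum>ys\<in>tuples N (n+1). H i ys * phi ys) + (\<Sum>ys\<in>tuples N (n+1). Cy ys * phi ys)"
    by (simp only: hc distrib_right sum_distrib_right sum.distrib) (subst sum.swap, rule refl)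
  also have "(\<Sum>i<n+1. \<Sum>ys\<in>tuples N (n+1). H i ys * phi ys) = (\<Sum>i<n+1. (-1)^i * (T i + T (Suc i)))"
  proof (rule sum.cong[OF refl])
    fix i assume "i \<in> {..<n+1}"
    then have i: "i < n+1" by simp
    define A where "A = take i xs"
    define B where "B = drop (i+2) xs"
    have dS: "drop (Suc i) xs = xs!(i+1) # B" using Cons_nth_drop_Suc[of "Suc i" xs] lx i by (simp add: B_def)
    have dec: "xs = A @ xs!i # xs!(i+1) # B"
      using id_take_nth_drop[of i xs] lx i dS by (simp add: A_def)
    have B': "drop (Suc (Suc i)) xs = B" by (simp add: B_def)
    have lA: "length A = i" using lx i by (simp add: A_def)
    have lB: "length B = n - i" using lx by (simp add: B_def)
    have sA: "set A \<subseteq> {..<N}" using sx by (auto simp: A_def dest: in_set_takeD)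
    have sB: "set B \<subseteq> {..<N}" using sx by (auto simp: B_def dest: in_set_dropD)
    have "(\<Sum>ys\<in>tuples N (n+1). H i ys * phi ys)
        = (\<Sum>ys\<in>tuples N (n+1). if take (length A) ys = A \<and> drop (Suc (length A)) ys = B
             then (-1)^i * CC (xs!i) (xs!(i+1)) (ys!i) * phi ys else 0)"
      by (intro sum.cong refl) (auto simp: H_def lA B' simp flip: A_def)
    also have "\<dots> = (\<Sum>m<N. (-1)^i * CC (xs!i) (xs!(i+1)) ((A @ m # B)!i) * phi (A @ m # B))"
      using select[OF sA sB, of "n+1" "\<lambda>ys. (-1)^i * CC (xs!i) (xs!(i+1)) (ys!i) * phi ys"] lA lB i by simp
    also have "\<dots> = (-1)^i * (\<Sum>m<N. CC (xs!i) (xs!(i+1)) m * phi (A @ m # B))"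
      by (simp add: sum_distrib_left lA nth_append ac_simps)
    also have "\<dots> = (-1)^i * (T i + T (Suc i))"
      unfolding N_def face T_def
      by (subst (3 4 5 6) dec) (simp add: lA list_update_append nth_append)
    finally show "(\<Sum>ys\<in>tuples N (n+1). H i ys * phi ys) = (-1)^i * (T i + T (Suc i))" .
  qed
  also have "(\<Sum>ys\<in>tuples N (n+1). Cy ys * phi ys) = (-1)^(n+1) * (T (n+1) + T 0)"
  proof -
    define B where "B = take n (tl xs)"
    define a where "a = xs!0"
    define z where "z = xs!(n+1)"
    obtain y ys where xy: "xs = y # ys" using lx by (cases xs) auto
    have lys: "length ys = n+1" using lx xy by simp
    have "ys = take (Suc n) ys" using lys by simp
    also have "\<dots> = take n ys @ [ys!n]" using lys by (intro take_Suc_conv_app_nth) simp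
    finally have ys: "ys = take n ys @ [ys!n]" .
    have dec: "xs = a # B @ [z]" using ys xy by (simp add: a_def B_def z_def)
    have lB: "length B = n" using lys xy by (simp add: B_def)
    have sB: "set B \<subseteq> {..<N}" using sx xy by (auto simp: B_def dest: in_set_takeD)
    have "(\<Sum>ys\<in>tuples N (n+1). Cy ys * phi ys)
       = (\<Sum>ys\<in>tuples N (n+1). if take (length ([]::nat list)) ys = [] \<and> drop (Suc (length ([]::nat list))) ys = B
             then (-1)^(n+1) * CC z a (ys!0) * phi ys else 0)"
      by (intro sum.cong refl) (simp add: Cy_def B_def a_def z_def drop_Suc)
    also have "\<dots> = (\<Sum>m<N. (-1)^(n+1) * CC z a (([] @ m # B)!0) * phi ([] @ m # B))"
      using select[of "[]" N B "n+1" "\<lambda>ys. (-1)^(n+1) * CC z a (ys!0) * phi ys"] sB lB by simp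
    also have "\<dots> = (-1)^(n+1) * (\<Sum>m<N. CC z a m * phi ([] @ m # B))"
      by (simp add: sum_distrib_left ac_simps)
    also have "\<dots> = (-1)^(n+1) * (tr (Wl (pv z # (ev a # map ev B))) + tr (Wl (ev z # (pv a # map ev B))))"
      unfolding N_def face by simp
    also have "\<dots> = (-1)^(n+1) * (tr (Wl ((ev a # map ev B) @ [pv z])) + tr (Wl ((pv a # map ev B) @ [ev z])))"
      by (simp only: tr_rot list.simps(3) not_False_eq_True)
    also have "\<dots> = (-1)^(n+1) * (T (n+1) + T 0)"
      unfolding T_def by (simp add: dec lB list_update_append nth_append)
    finally show ?thesis .
  qed
  also have "(\<Sum>i<n+1. (-1)^i * (T i + T (Suc i))) = T 0 + T (Suc n)"
    using telescope[where n=n and T=T] ev by simp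
  finally show ?thesis using ev unfolding N_def by simp
qed

end


context hs begin

lemma tr_pv: assumes "m < d" shows "tr (mulv (pv (d+m)) w) = w m"
proof -
  have "tr (mulv (pv (d+m)) w) = (\<Sum>k<d. (\<Sum>j<2*d. w j * cB (d+m) j (d+k)) * u k)"
    using assms by (simp add: tr_def mulv_pv_l)
  also have "\<dots> = (\<Sum>k<d. (\<Sum>j<d. w j * c j k m) * u k)"
    using assms by (simp add: sum_split2 trivext_def)
  also have "\<dots> = (\<Sum>j<d. w j * (\<Sum>k<d. c j k m * u k))"
    by (simp add: sum_distrib_left sum_distrib_right mult.assoc) (rule sum.swap)
  also have "\<dots> = (\<Sum>j<d. if j = m then w m else 0)"
    by (intro sum.cong refl) (simp add: runit' assms)
  also have "\<dots> = w m" using assms by simp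
  finally show ?thesis .
qed

lemma left_unit: assumes "m < d" shows "(\<Sum>i<d. u i * mulv (pv i) w m) = w m"
proof -
  have "(\<Sum>i<d. u i * mulv (pv i) w m) = (\<Sum>i<d. u i * (\<Sum>j<d. w j * c i j m))"
    using assms by (intro sum.cong refl) (simp add: mulv_pv_l sum_split2 trivext_def not_le[symmetric])
  also have "\<dots> = (\<Sum>j<d. w j * (\<Sum>i<d. c i j m * u i))"
    by (simp add: sum_distrib_left sum_distrib_right) (subst sum.swap, simp add: ac_simps)
  also have "\<dots> = (\<Sum>j<d. if j = m then w m else 0)"
    by (intro sum.cong refl) (simp add: lunit' assms)
  also have "\<dots> = w m" using assms by simp
  finally show ?thesis .
qed

lemma exist_word: assumes "m < d"
  shows "\<exists>xs. length xs = Suc n \<and> set xs \<subseteq> {..<d} \<and> Wl (map pv xs) m \<noteq> 0"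
proof (induction n)
  case 0
  show ?case using assms by (intro exI[of _ "[m]"]) (simp add: pv_def)
next
  case (Suc n)
  then obtain xs where xs: "length xs = Suc n" "set xs \<subseteq> {..<d}" "Wl (map pv xs) m \<noteq> 0" by blast
  let ?w = "Wl (map pv xs)"
  have "(\<Sum>i<d. u i * mulv (pv i) ?w m) \<noteq> 0" using left_unit[OF assms] xs by simp
  then obtain i where i: "i < d" "u i * mulv (pv i) ?w m \<noteq> 0"
    using sum.not_neutral_contains_not_neutral by blast
  have ne: "map pv xs \<noteq> []" using xs by auto
  have "Wl (map pv (i # xs)) = mulv (pv i) ?w" using ne by (simp add: Wl_cons)
  then show ?case using xs i by (intro exI[of _ "i # xs"]) auto
qed

lemma CC_big: "2*d \<le> a \<Longrightarrow> 2*d \<le> b \<Longrightarrow> CC a b k = 0"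
  by (simp add: trivext_def)

lemma HH_even: assumes "even n" "n \<ge> 2" shows "HH_nonzero CC (2*(2*d)) n"
proof -
  define N where "N = 2*(2*d)"
  obtain m where m: "m < d" "u m \<noteq> 0"
  proof -
    have "(\<Sum>i<d. u i * c i 0 0) = 1" using lunit[of 0 0] dpos by simp
    then obtain i where "i < d" "u i * c i 0 0 \<noteq> 0" using sum.not_neutral_contains_not_neutral[of "\<lambda>i. u i * c i 0 0" "{..<d}"] by auto
    then have "i < d" "u i \<noteq> 0" by auto
    then show ?thesis using that by blast
  qed
  obtain n' where n': "n = Suc n'" using assms by (cases n) auto
  obtain xs where xs: "length xs = Suc n'" "set xs \<subseteq> {..<d}" "Wl (map pv xs) m \<noteq> 0"
    using exist_word[OF m(1)] by blast
  define ys where "ys = (2*d + m) # map (\<lambda>x. 2*d + d + x) xs"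
  have ysT: "ys \<in> tuples N (n+1)" using xs m n' by (auto simp: ys_def tuples_def N_def)
  have ysbig: "\<And>t. t \<in> set ys \<Longrightarrow> 2*d \<le> t" by (auto simp: ys_def)
  have ev1: "ev (2*d + m) = pv (d + m)" using m by (auto simp: ev_def pv_def sg_def)
  have ev2: "\<And>x. x < d \<Longrightarrow> ev (2*d + d + x) = pv x" by (auto simp: ev_def pv_def sg_def)
  have "map ev ys = pv (d+m) # map pv xs" using xs ev2 by (auto simp: ys_def ev1)
  then have phiys: "phi ys = Wl (map pv xs) m"
  proof -
    have ne: "map pv xs \<noteq> []" using xs by auto
    show ?thesis using \<open>map ev ys = _\<close> tr_pv[OF m(1)] ne by (simp add: phi_def Wl_cons)
  qed
  define z where "z = (\<lambda>t. if t = ys then (1::'k) else 0)"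
  have zc: "z \<in> hchains N n" using ysT by (auto simp: z_def hchains_def)
  have bz: "hbd CC N n z = (\<lambda>_. 0)"
  proof
    fix t
    have "hcoef CC n ys t = 0"
    proof -
      have ly: "length ys = n+1" using ysT by (simp add: tuples_def)
      have big: "\<And>i. i < n+1 \<Longrightarrow> 2*d \<le> ys!i" using ly ysbig nth_mem by metis
      have "\<And>i. i < n \<Longrightarrow> CC (ys!i) (ys!(i+1)) (t!i) = 0"
        using big by (intro CC_big) auto
      moreover have "CC (ys!n) (ys!0) (t!0) = 0"
        using big by (intro CC_big) auto
      ultimately show ?thesis unfolding hcoef_def by (auto intro!: sum.neutral)
    qed
    moreover have "(\<Sum>x\<in>tuples N (n+1). z x * hcoef CC n x t) = (\<Sum>x\<in>tuples N (n+1). if x = ys then hcoef CC n ys t else 0)"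
      by (intro sum.cong refl) (auto simp: z_def)
    ultimately have "(\<Sum>x\<in>tuples N (n+1). z x * hcoef CC n x t) = 0" using ysT finite_tuples by simp
    then show "hbd CC N n z t = 0" using n' by (simp add: hbd_def)
  qed
  have nb: "\<not> (\<exists>w\<in>hchains N (n+1). hbd CC N (n+1) w = z)"
  proof
    assume "\<exists>w\<in>hchains N (n+1). hbd CC N (n+1) w = z"
    then obtain w where w: "hbd CC N (n+1) w = z" by blast
    have "(\<Sum>t\<in>tuples N (n+1). z t * phi t) = (\<Sum>t\<in>tuples N (n+1). if t = ys then phi ys else 0)"
      by (intro sum.cong refl) (auto simp: z_def)
    then have "phi ys = (\<Sum>t\<in>tuples N (n+1). z t * phi t)"
      using ysT finite_tuples by simp
    also have "\<dots> = (\<Sum>t\<in>tuples N (n+1). (\<Sum>x\<in>tuples N (n+2). w x * hcoef CC (n+1) x t) * phi t)"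
      by (intro sum.cong refl) (simp add: w[symmetric] hbd_def numeral_2_eq_2)
    also have "\<dots> = (\<Sum>x\<in>tuples N (n+2). w x * (\<Sum>t\<in>tuples N (n+1). hcoef CC (n+1) x t * phi t))"
      by (simp only: sum_distrib_left sum_distrib_right mult.assoc) (rule sum.swap)
    also have "\<dots> = 0"
      using bound_zero assms(1) by (simp add: N_def)
    finally show False using phiys xs by simp
  qed
  show ?thesis unfolding HH_nonzero_def N_def[symmetric] using zc bz nb by blast
qed

end

theorem corollary3p6:
  fixes c :: "nat \<Rightarrow> nat \<Rightarrow> nat \<Rightarrow> 'k::field" and d :: nat
  assumes "alg_closed_field TYPE('k)"
    and "fd_algebra c d"
    and "d > 0"
  shows "HHdim (trivext (trivext c d) (2*d)) (2*(2*d)) = \<infinity>"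
proof -
  from assms(2) obtain u where A: "\<forall>i<d. \<forall>j<d. \<forall>l<d. \<forall>m<d.
        (\<Sum>k<d. c i j k * c k l m) = (\<Sum>k<d. c j l k * c i k m)"
    and U: "\<forall>j<d. \<forall>m<d.
        (\<Sum>i<d. u i * c i j m) = (if j = m then 1 else 0) \<and>
        (\<Sum>i<d. u i * c j i m) = (if j = m then 1 else 0)"
    unfolding fd_algebra_def by blast
  interpret hs c d u using A U assms(3) by unfold_locales auto
  have "Sup {enat n |n. HH_nonzero (trivext (trivext c d) (2 * d)) (2 * (2 * d)) n} = (top::enat)"
  proof (subst Sup_eq_top_iff, intro allI impI)
    fix x :: enat assume "x < top"
    then obtain k where k: "x = enat k" by (cases x) auto
    have "HH_nonzero (trivext (trivext c d) (2*d)) (2*(2*d)) (2*k+2)" by (rule HH_even) auto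
    then show "\<exists>i\<in>{enat n |n. HH_nonzero (trivext (trivext c d) (2 * d)) (2 * (2 * d)) n}. x < i"
      using k by (intro bexI[of _ "enat (2*k+2)"]) auto
  qed
  then show ?thesis unfolding HHdim_def by (simp add: top_enat_def)
qed


end
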